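(* Let $\mathcal{X}_0=\{\mathbf{x}^{(0)}_1,\dots,\mathbf{x}^{(0)}_{n_0}\}$ and $\mathcal{X}_1=\{\mathbf{x}^{(1)}_1,\dots,\mathbf{x}^{(1)}_{n_1}\}$ be finite sets of points in $\mathbb{R}^d$, let $\mathcal{P}_0,\mathcal{P}_1$ be the uniform (empirical) distributions on them, and let $\mathbf{X}_0\sim\mathcal{P}_0$, $\mathbf{X}_1\sim\mathcal{P}_1$. Let $f:\mathbb{R}^d\times\{0,1\}\to[0,1]$, and let $\mathcal{P}_{f_0},\mathcal{P}_{f_1}$ be the empirical distributions on $f(\mathcal{X}_0)=\{f(\mathbf{x},0):\mathbf{x}\in\mathcal{X}_0\}$ and $f(\mathcal{X}_1)=\{f(\mathbf{x},1):\mathbf{x}\in\mathcal{X}_1\}$, i.e. the distributions of $f(\mathbf{X}_0,0)$ and $f(\mathbf{X}_1,1)$. Assume the supports of $\mathcal{P}_{f_0}$ and $\mathcal{P}_{f_1}$ share $m\ (\le n_0,n_1)$ common points. Then for any $\delta\ge0$, if $\Delta\mathrm{TVDP}(f)\le\delta$, there exists a joint distribution $\mathbb{Q}$ of $(\mathbf{X}_0,\mathbf{X}_1)$ with marginals $\mathcal{P}_0$ and $\mathcal{P}_1$ such that $\Delta\mathrm{MDP}(f,\mathbb{Q})\le\delta$.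
   Context: $\Delta\mathrm{TVDP}(f):=\mathrm{TV}(\mathcal{P}_{f_0},\mathcal{P}_{f_1})$, where for discrete distributions $\mathrm{TV}(\mathcal{Q}_1,\mathcal{Q}_2)=\sup_B|\mathcal{Q}_1(B)-\mathcal{Q}_2(B)|=\tfrac12\sum_z|\mathcal{Q}_1(z)-\mathcal{Q}_2(z)|$. For a joint distribution $\mathbb{Q}$ of $(\mathbf{X}_0,\mathbf{X}_1)$ with marginals $\mathcal{P}_0,\mathcal{P}_1$ (a stochastic transport map), $\Delta\mathrm{MDP}(f,\mathbb{Q}):=\mathbb{E}_{(\mathbf{X}_0,\mathbf{X}_1)\sim\mathbb{Q}}|f(\mathbf{X}_0,0)-f(\mathbf{X}_1,1)|$. *)

theory Defs
  imports "HOL-Probability.Probability"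
begin

definition TV :: "'a pmf \<Rightarrow> 'a pmf \<Rightarrow> real" where
  "TV Q1 Q2 = (SUP B. \<bar>measure_pmf.prob Q1 B - measure_pmf.prob Q2 B\<bar>)"

definition Pf :: "('a \<Rightarrow> nat \<Rightarrow> real) \<Rightarrow> nat \<Rightarrow> 'a pmf \<Rightarrow> real pmf" where
  "Pf f s P = map_pmf (\<lambda>x. f x s) P"

definition DeltaTVDP :: "('a \<Rightarrow> nat \<Rightarrow> real) \<Rightarrow> 'a pmf \<Rightarrow> 'a pmf \<Rightarrow> real" where
  "DeltaTVDP f P0 P1 = TV (Pf f 0 P0) (Pf f 1 P1)"

definition DeltaMDP :: "('a \<Rightarrow> nat \<Rightarrow> real) \<Rightarrow> ('a \<times> 'a) pmf \<Rightarrow> real" where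
  "DeltaMDP f Q = measure_pmf.expectation Q (\<lambda>(x0, x1). \<bar>f x0 0 - f x1 1\<bar>)"

end

theory Submission imports Defs begin

lemma integral_bind_pmf_bdd0:
  fixes g :: "'b \<Rightarrow> real"
  assumes "\<And>y. \<bar>g y\<bar> \<le> B"
  shows "measure_pmf.expectation (bind_pmf M N) g = measure_pmf.expectation M (\<lambda>x. measure_pmf.expectation (N x) g)"
  unfolding measure_pmf_bind
  apply (rule integral_bind[where K="count_space UNIV" and B=B and B'=1])
  using assms apply (auto simp: measure_pmf.finite_measure_axioms measure_pmf_in_subprob_space)
  done

lemma integral_bind_pmf_bdd:
  fixes g :: "'b \<Rightarrow> real"
  assumes b: "\<And>y. y \<in> set_pmf (bind_pmf M N) \<Longrightarrow> \<bar>g y\<bar> \<le> B"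
  shows "measure_pmf.expectation (bind_pmf M N) g = measure_pmf.expectation M (\<lambda>x. measure_pmf.expectation (N x) g)"
proof -
  define g' where "g' = (\<lambda>y. max (-B) (min B (g y)))"
  have gg: "g' y = g y" if "y \<in> set_pmf (bind_pmf M N)" for y
    using b[OF that] by (auto simp: g'_def abs_le_iff)
  have "measure_pmf.expectation (bind_pmf M N) g = measure_pmf.expectation (bind_pmf M N) g'"
    by (rule integral_cong_AE) (use gg in \<open>auto simp: AE_measure_pmf_iff\<close>)
  also have "\<dots> = measure_pmf.expectation M (\<lambda>x. measure_pmf.expectation (N x) g')"
    by (rule integral_bind_pmf_bdd0[where B="\<bar>B\<bar>"]) (auto simp: g'_def abs_if max_def min_def)
  also have "\<dots> = measure_pmf.expectation M (\<lambda>x. measure_pmf.expectation (N x) g)"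
  proof (rule integral_cong_AE)
    show "AE x in measure_pmf M. measure_pmf.expectation (N x) g' = measure_pmf.expectation (N x) g"
      unfolding AE_measure_pmf_iff
    proof
      fix x assume x: "x \<in> set_pmf M"
      show "measure_pmf.expectation (N x) g' = measure_pmf.expectation (N x) g"
        by (rule integral_cong_AE) (use gg x in \<open>auto simp: AE_measure_pmf_iff\<close>)
    qed
  qed auto
  finally show ?thesis .
qed

lemma TV_lower:
  fixes p q :: "'a pmf"
  shows "\<bar>measure_pmf.prob p B - measure_pmf.prob q B\<bar> \<le> TV p q"
  unfolding TV_def
proof (rule cSUP_upper)
  show "bdd_above (range (\<lambda>B. \<bar>measure_pmf.prob p B - measure_pmf.prob q B\<bar>))"
  proof (rule bdd_aboveI)
    fix x assume "x \<in> range (\<lambda>B. \<bar>measure_pmf.prob p B - measure_pmf.prob q B\<bar>)"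
    then obtain B where xB: "x = \<bar>measure_pmf.prob p B - measure_pmf.prob q B\<bar>" by auto
    have h: "measure_pmf.prob p B \<le> 1" "measure_pmf.prob q B \<le> 1"
      "0 \<le> measure_pmf.prob p B" "0 \<le> measure_pmf.prob q B" by auto
    show "x \<le> 1" unfolding xB abs_le_iff using h by linarith
  qed
qed auto

lemma maxcoup:
  fixes p q :: "real pmf"
  assumes finp: "finite (set_pmf p)" and finq: "finite (set_pmf q)"
    and bp: "\<And>y. y \<in> set_pmf p \<Longrightarrow> y \<in> {0..1}"
    and bq: "\<And>y. y \<in> set_pmf q \<Longrightarrow> y \<in> {0..1}"
  shows "\<exists>W. map_pmf fst W = p \<and> map_pmf snd W = q \<and>
           measure_pmf.expectation W (\<lambda>(a, b). \<bar>a - b\<bar>) \<le> TV p q"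
proof -
  define S where "S = set_pmf p \<union> set_pmf q"
  have finS: "finite S" by (simp add: S_def finp finq)
  define c where "c = (\<lambda>y. min (pmf p y) (pmf q y))"
  define t where "t = (\<Sum>y\<in>S. c y)"
  have sp: "(\<Sum>y\<in>S. pmf p y) = 1" by (rule sum_pmf_eq_1) (auto simp: finS S_def finp finq)
  have sq: "(\<Sum>y\<in>S. pmf q y) = 1" by (rule sum_pmf_eq_1) (auto simp: finS S_def finp finq)
  have c0: "c y = 0" if "y \<notin> S" for y
    using that by (auto simp: c_def S_def set_pmf_iff)
  have cnn: "0 \<le> c y" for y by (simp add: c_def)
  have cp: "c y \<le> pmf p y" "c y \<le> pmf q y" for y by (auto simp: c_def)
  have sdiff: "(\<Sum>y\<in>S. pmf p y - c y) = 1 - t"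
    by (simp add: sum_subtractf sp t_def)
  have sdiffq: "(\<Sum>y\<in>S. pmf q y - c y) = 1 - t"
    by (simp add: sum_subtractf sq t_def)
  have t1: "t \<le> 1" using sdiff sum_nonneg[of S "\<lambda>y. pmf p y - c y"] cp by auto
  have TVb: "1 - t \<le> TV p q"
  proof -
    define B0 where "B0 = {y\<in>S. pmf q y < pmf p y}"
    have finB0: "finite B0" using finS by (simp add: B0_def)
    have "1 - t = (\<Sum>y\<in>S. if pmf q y < pmf p y then pmf p y - pmf q y else 0)"
      unfolding sdiff[symmetric] by (rule sum.cong) (auto simp: c_def)
    also have "\<dots> = (\<Sum>y\<in>B0. pmf p y - pmf q y)"
      unfolding B0_def by (rule sum.inter_filter[symmetric]) (rule finS)
    also have "\<dots> = measure_pmf.prob p B0 - measure_pmf.prob q B0"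
      by (simp add: measure_measure_pmf_finite finB0 sum_subtractf)
    also have "\<dots> \<le> TV p q" using TV_lower[of p B0 q] by linarith
    finally show ?thesis .
  qed
  show ?thesis
  proof (cases "p = q")
    case True
    define W where "W = map_pmf (\<lambda>y. (y, y)) p"
    have "map_pmf fst W = p" "map_pmf snd W = q"
      using True by (simp_all add: W_def pmf.map_comp o_def)
    moreover have "measure_pmf.expectation W (\<lambda>(a, b). \<bar>a - b\<bar>) = 0"
      by (simp add: W_def)
    moreover have "0 \<le> TV p q" using TVb t1 by linarith
    ultimately show ?thesis by auto
  next
    case False
    have tl1: "t < 1"
    proof (rule ccontr)
      assume "\<not> t < 1"
      hence e1: "(\<Sum>y\<in>S. pmf p y - c y) = 0" and e2: "(\<Sum>y\<in>S. pmf q y - c y) = 0"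
        using sdiff sdiffq t1 by auto
      have A1: "\<forall>y\<in>S. pmf p y - c y = 0"
        using sum_nonneg_eq_0_iff[OF finS, of "\<lambda>y. pmf p y - c y"] cp(1) e1 by simp
      have A2: "\<forall>y\<in>S. pmf q y - c y = 0"
        using sum_nonneg_eq_0_iff[OF finS, of "\<lambda>y. pmf q y - c y"] cp(2) e2 by simp
      have "pmf p y = pmf q y" for y
      proof (cases "y \<in> S")
        case True
        from A1 True have "pmf p y = c y" by simp
        moreover from A2 True have "pmf q y = c y" by simp
        ultimately show ?thesis by simp
      next
        case False
        then have "y \<notin> set_pmf p" "y \<notin> set_pmf q" by (auto simp: S_def)
        thus ?thesis by (simp add: set_pmf_iff)
      qed
      hence "p = q" by (rule pmf_eqI)
      thus False using False by simp
    qed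
    define g where "g = (\<lambda>z. (pmf q z - c z) / (1 - t))"
    have gnn: "0 \<le> g z" for z using cp tl1 by (simp add: g_def)
    have g0: "g z = 0" if "z \<notin> S" for z using that c0 by (auto simp: g_def S_def set_pmf_iff)
    have gsum: "(\<Sum>z\<in>S. g z) = 1"
      using tl1 sdiffq by (simp add: g_def sum_divide_distrib[symmetric])
    have gint: "(\<integral>\<^sup>+x. ennreal (g x) \<partial>count_space UNIV) = 1"
    proof -
      have "(\<integral>\<^sup>+x. ennreal (g x) \<partial>count_space UNIV) = (\<Sum>x\<in>S. ennreal (g x))"
        by (rule nn_integral_count_space') (auto simp: finS g0)
      also have "\<dots> = 1" using gnn gsum by simp
      finally show ?thesis .
    qed
    define Q' where "Q' = embed_pmf g"
    have pQ': "pmf Q' z = g z" for z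
      unfolding Q'_def by (rule pmf_embed_pmf) (auto simp: gnn gint)
    have setQ': "set_pmf Q' \<subseteq> S"
    proof
      fix z assume "z \<in> set_pmf Q'"
      hence "g z \<noteq> 0" by (simp add: set_pmf_iff pQ')
      thus "z \<in> S" using g0 by blast
    qed
    define r where "r = (\<lambda>y. c y / pmf p y)"
    have r01: "0 \<le> r y" "r y \<le> 1" for y
      using cp[of y] cnn[of y] by (auto simp: r_def divide_le_eq_1)
    have pr: "pmf p y * r y = c y" for y
      using cp[of y] cnn[of y] by (auto simp: r_def)
    define K where "K = (\<lambda>y. bind_pmf (bernoulli_pmf (r y)) (\<lambda>b. if b then return_pmf y else Q'))"
    define W where "W = bind_pmf p (\<lambda>y. map_pmf (Pair y) (K y))"
    have pK: "pmf (K y) z = r y * indicator {y} z + (1 - r y) * g z" for y z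
      using r01[of y] by (simp add: K_def pmf_bind pQ' indicator_def)
    have m1: "map_pmf fst W = p"
      by (simp add: W_def map_bind_pmf pmf.map_comp o_def bind_return_pmf')
    have "map_pmf snd W = bind_pmf p K"
      by (simp add: W_def map_bind_pmf pmf.map_comp o_def)
    also have "\<dots> = q"
    proof (rule pmf_eqI)
      fix z
      have "pmf (bind_pmf p K) z = (\<Sum>y\<in>S. pmf (K y) z * pmf p y)"
        unfolding pmf_bind by (rule integral_measure_pmf_real) (auto simp: finS S_def finp finq)
      also have "\<dots> = (\<Sum>y\<in>S. c y * indicator {y} z + (pmf p y - c y) * g z)"
        by (rule sum.cong) (auto simp: pK algebra_simps pr[symmetric])
      also have "\<dots> = (\<Sum>y\<in>S. c y * indicator {y} z) + (1 - t) * g z"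
        by (simp add: sum.distrib sum_distrib_right[symmetric] sdiff)
      also have "(\<Sum>y\<in>S. c y * indicator {y} z) = c z"
        using c0[of z] finS by (cases "z \<in> S") (auto simp: indicator_def sum.delta)
      also have "c z + (1 - t) * g z = pmf q z" using tl1 by (simp add: g_def)
      finally show "pmf (bind_pmf p K) z = pmf q z" .
    qed
    finally have m2: "map_pmf snd W = q" .
    have S01: "y \<in> {0..1}" if "y \<in> S" for y using that bp bq by (auto simp: S_def)
    have setK: "set_pmf (K y) \<subseteq> insert y S" for y
      using setQ' by (auto simp: K_def split: if_splits)
    have EK: "measure_pmf.expectation (K y) (\<lambda>z. \<bar>y - z\<bar>) \<le> 1 - r y" if y: "y \<in> S" for y
    proof -
      have bK: "\<bar>y - z\<bar> \<le> 1" if "z \<in> set_pmf (K y)" for z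
      proof -
        have "z \<in> insert y S" using setK[of y] that by blast
        thus ?thesis using S01[OF y] S01[of z] by (auto simp: abs_le_iff)
      qed
      have "measure_pmf.expectation (K y) (\<lambda>z. \<bar>y - z\<bar>) =
          measure_pmf.expectation (bernoulli_pmf (r y))
            (\<lambda>b. measure_pmf.expectation (if b then return_pmf y else Q') (\<lambda>z. \<bar>y - z\<bar>))"
        unfolding K_def
        by (rule integral_bind_pmf_bdd[where B=1]) (use bK in \<open>auto simp: K_def\<close>)
      also have "\<dots> = (1 - r y) * measure_pmf.expectation Q' (\<lambda>z. \<bar>y - z\<bar>)"
        using r01[of y] by simp
      also have "\<dots> \<le> (1 - r y) * 1"
      proof (rule mult_left_mono)
        have "measure_pmf.expectation Q' (\<lambda>z. \<bar>y - z\<bar>) = (\<Sum>z\<in>S. \<bar>y - z\<bar> * pmf Q' z)"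
          by (rule integral_measure_pmf_real) (use setQ' finS in auto)
        also have "\<dots> \<le> (\<Sum>z\<in>S. 1 * pmf Q' z)"
        proof (rule sum_mono, rule mult_right_mono)
          fix z assume "z \<in> S"
          thus "\<bar>y - z\<bar> \<le> 1" using S01[OF y] S01[of z] by (auto simp: abs_le_iff)
        qed simp
        also have "\<dots> = 1" using sum_pmf_eq_1[OF finS setQ'] by simp
        finally show "measure_pmf.expectation Q' (\<lambda>z. \<bar>y - z\<bar>) \<le> 1" .
      qed (use r01[of y] in simp)
      finally show ?thesis by simp
    qed
    have "measure_pmf.expectation W (\<lambda>(a, b). \<bar>a - b\<bar>) =
        measure_pmf.expectation p (\<lambda>y. measure_pmf.expectation (map_pmf (Pair y) (K y)) (\<lambda>(a, b). \<bar>a - b\<bar>))"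
      unfolding W_def
    proof (rule integral_bind_pmf_bdd[where B=1])
      fix w assume "w \<in> set_pmf (bind_pmf p (\<lambda>y. map_pmf (Pair y) (K y)))"
      then obtain y z where w: "w = (y, z)" and y: "y \<in> set_pmf p" and z: "z \<in> set_pmf (K y)"
        by auto
      have yS: "y \<in> S" using y by (simp add: S_def)
      have "z \<in> insert y S" using setK[of y] z by blast
      thus "\<bar>(\<lambda>(a, b). \<bar>a - b\<bar>) w\<bar> \<le> 1" using S01[OF yS] S01[of z] w by (auto simp: abs_le_iff)
    qed
    also have "\<dots> = measure_pmf.expectation p (\<lambda>y. measure_pmf.expectation (K y) (\<lambda>z. \<bar>y - z\<bar>))"
      by simp
    also have "\<dots> = (\<Sum>y\<in>S. measure_pmf.expectation (K y) (\<lambda>z. \<bar>y - z\<bar>) * pmf p y)"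
      by (rule integral_measure_pmf_real) (auto simp: finS S_def finp finq)
    also have "\<dots> \<le> (\<Sum>y\<in>S. (1 - r y) * pmf p y)"
      by (rule sum_mono, rule mult_right_mono) (auto simp: EK)
    also have "\<dots> = (\<Sum>y\<in>S. pmf p y - c y)"
      by (rule sum.cong) (auto simp: algebra_simps pr[symmetric])
    also have "\<dots> \<le> TV p q" using sdiff TVb by simp
    finally show ?thesis using m1 m2 by blast
  qed
qed

theorem mainTheorem3:
  fixes X0 X1 :: "(real ^ 'd) set"
    and f :: "real ^ 'd \<Rightarrow> nat \<Rightarrow> real"
    and m :: nat and \<delta> :: real
  assumes "finite X0" "X0 \<noteq> {}" "finite X1" "X1 \<noteq> {}"
    and "\<And>x s. s \<in> {0, 1} \<Longrightarrow> f x s \<in> {0..1}"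
    and "card (set_pmf (Pf f 0 (pmf_of_set X0)) \<inter> set_pmf (Pf f 1 (pmf_of_set X1))) = m"
    and "m \<le> card X0" "m \<le> card X1"
    and "\<delta> \<ge> 0"
    and "DeltaTVDP f (pmf_of_set X0) (pmf_of_set X1) \<le> \<delta>"
  shows "\<exists>Q :: ((real ^ 'd) \<times> (real ^ 'd)) pmf.
           map_pmf fst Q = pmf_of_set X0 \<and> map_pmf snd Q = pmf_of_set X1 \<and>
           DeltaMDP f Q \<le> \<delta>"
proof -
  define P0 where "P0 = pmf_of_set X0"
  define P1 where "P1 = pmf_of_set X1"
  have sP0: "set_pmf P0 = X0" using assms(1,2) by (simp add: P0_def)
  have sP1: "set_pmf P1 = X1" using assms(3,4) by (simp add: P1_def)
  define p where "p = Pf f 0 P0"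
  define q where "q = Pf f 1 P1"
  have sp: "set_pmf p = (\<lambda>x. f x 0) ` X0" by (simp add: p_def Pf_def sP0)
  have sq: "set_pmf q = (\<lambda>x. f x 1) ` X1" by (simp add: q_def Pf_def sP1)
  have f0: "f x 0 \<in> {0..1}" and f1: "f x 1 \<in> {0..1}" for x using assms(5) by auto
  obtain W where W1: "map_pmf fst W = p" and W2: "map_pmf snd W = q"
    and WE: "measure_pmf.expectation W (\<lambda>(a, b). \<bar>a - b\<bar>) \<le> TV p q"
    using maxcoup[of p q] assms(1,3) f0 f1 by (auto simp: sp sq)
  define C0 where "C0 = (\<lambda>y. cond_pmf P0 {x. f x 0 = y})"
  define C1 where "C1 = (\<lambda>y. cond_pmf P1 {x. f x 1 = y})"
  define Q where "Q = bind_pmf W (\<lambda>w. pair_pmf (C0 (fst w)) (C1 (snd w)))"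
  have "map_pmf fst Q = bind_pmf W (\<lambda>w. C0 (fst w))"
    by (simp add: Q_def map_bind_pmf map_fst_pair_pmf)
  also have "\<dots> = bind_pmf p C0" by (simp add: W1[symmetric] bind_map_pmf)
  also have "\<dots> = bind_pmf P0 (\<lambda>x. cond_pmf P0 {y. f y 0 = f x 0})"
    by (simp add: p_def Pf_def bind_map_pmf C0_def)
  also have "\<dots> = P0"
    by (rule bind_cond_pmf_cancel) (auto intro: arg_cong[where f="measure_pmf.prob P0"])
  finally have Q1: "map_pmf fst Q = P0" .
  have "map_pmf snd Q = bind_pmf W (\<lambda>w. C1 (snd w))"
    by (simp add: Q_def map_bind_pmf map_snd_pair_pmf)
  also have "\<dots> = bind_pmf q C1" by (simp add: W2[symmetric] bind_map_pmf)
  also have "\<dots> = bind_pmf P1 (\<lambda>x. cond_pmf P1 {y. f y 1 = f x 1})"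
    by (simp add: q_def Pf_def bind_map_pmf C1_def)
  also have "\<dots> = P1"
    by (rule bind_cond_pmf_cancel) (auto intro: arg_cong[where f="measure_pmf.prob P1"])
  finally have Q2: "map_pmf snd Q = P1" .
  define h where "h = (\<lambda>(x0, x1). \<bar>f x0 0 - f x1 1\<bar>)"
  have hb: "\<bar>h w\<bar> \<le> 1" for w
    using f0[of "fst w"] f1[of "snd w"] by (auto simp: h_def abs_le_iff split: prod.splits)
  have "DeltaMDP f Q = measure_pmf.expectation W (\<lambda>w. measure_pmf.expectation (pair_pmf (C0 (fst w)) (C1 (snd w))) h)"
    unfolding DeltaMDP_def h_def[symmetric] Q_def
    by (rule integral_bind_pmf_bdd[where B=1]) (rule hb)
  also have "\<dots> = measure_pmf.expectation W (\<lambda>(a, b). \<bar>a - b\<bar>)"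
  proof (rule integral_cong_AE)
    show "AE w in measure_pmf W. measure_pmf.expectation (pair_pmf (C0 (fst w)) (C1 (snd w))) h = (\<lambda>(a, b). \<bar>a - b\<bar>) w"
      unfolding AE_measure_pmf_iff
    proof
      fix w assume w: "w \<in> set_pmf W"
      obtain a b where ab: "w = (a, b)" by (cases w)
      have "a \<in> set_pmf p" using w ab W1 by (metis fst_conv pmf.set_map imageI)
      then obtain x0 where x0: "x0 \<in> X0" "f x0 0 = a" using sp by auto
      have "b \<in> set_pmf q" using w ab W2 by (metis snd_conv pmf.set_map imageI)
      then obtain x1 where x1: "x1 \<in> X1" "f x1 1 = b" using sq by auto
      have sC0: "set_pmf (C0 a) = X0 \<inter> {x. f x 0 = a}"
        unfolding C0_def by (subst set_cond_pmf) (use x0 sP0 in auto)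
      have sC1: "set_pmf (C1 b) = X1 \<inter> {x. f x 1 = b}"
        unfolding C1_def by (subst set_cond_pmf) (use x1 sP1 in auto)
      have "measure_pmf.expectation (pair_pmf (C0 a) (C1 b)) h =
            measure_pmf.expectation (pair_pmf (C0 a) (C1 b)) (\<lambda>_. \<bar>a - b\<bar>)"
        by (rule integral_cong_AE) (auto simp: AE_measure_pmf_iff sC0 sC1 h_def)
      also have "\<dots> = \<bar>a - b\<bar>" by simp
      finally show "measure_pmf.expectation (pair_pmf (C0 (fst w)) (C1 (snd w))) h = (\<lambda>(a, b). \<bar>a - b\<bar>) w"
        by (simp add: ab)
    qed
  qed auto
  also have "\<dots> \<le> TV p q" by (rule WE)
  also have "TV p q = DeltaTVDP f (pmf_of_set X0) (pmf_of_set X1)"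
    by (simp add: DeltaTVDP_def p_def q_def P0_def P1_def)
  also have "\<dots> \<le> \<delta>" by (rule assms(10))
  finally show ?thesis using Q1 Q2 unfolding P0_def P1_def by blast
qed

end
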